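(* Let $\mathcal{H}\in\mathbb{R}_D^{[n_1,\ldots,n_m]}$. Then $\mathcal{H}$ is $\mathbb{R}$-psd if and only if $\mathcal{H}$ is $\mathbb{C}$-psd.
   Context: For vectors $v_i$, $[v_1,\ldots,v_m]_{\otimes h}:=v_1\otimes\cdots\otimes v_m\otimes\overline{v_1}\otimes\cdots\otimes\overline{v_m}$. $\mathbb{R}_D^{[n_1,\ldots,n_m]}$ is the set of real tensors of the form $\sum_i\lambda_i[u_i^1,\ldots,u_i^m]_{\otimes h}$ with $\lambda_i\in\mathbb{R}$ and $u_i^j\in\mathbb{R}^{n_j}$. For a Hermitian tensor $\mathcal{H}$ (i.e. $\mathcal{H}_{i_1\ldots i_m j_1\ldots j_m}=\overline{\mathcal{H}_{j_1\ldots j_m i_1\ldots i_m}}$) and $x=(x_1,\ldots,x_m)$, $\mathcal{H}(x,\overline{x}):=\langle\mathcal{H},[x_1,\ldots,x_m]_{\otimes h}\rangle$ with $\langle\mathcal{A},\mathcal{B}\rangle=\sum\mathcal{A}_{\cdot}\overline{\mathcal{B}_{\cdot}}$. $\mathcal{H}$ is $\mathbb{R}$-psd if $\mathcal{H}(x,\overline{x})\ge0$ for all real $x_i\in\mathbb{R}^{n_i}$, and $\mathbb{C}$-psd if $\mathcal{H}(x,\overline{x})\ge0$ for all complex $x_i\in\mathbb{C}^{n_i}$. *)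

theory Defs
  imports "HOL-Analysis.Analysis"
begin

text \<open>A multi-index (i_1,...,i_m) is a function i :: nat => nat in the extensional
  function space idx m n; a tensor is a function of two multi-indices
  (the first m and the last m indices). A vector tuple (x_1,...,x_m) is a function
  x :: nat => nat => 'a where x k is the vector x_{k+1} (only coordinates < n k matter).\<close>

definition idx :: "nat \<Rightarrow> (nat \<Rightarrow> nat) \<Rightarrow> (nat \<Rightarrow> nat) set" where
  "idx m n = (\<Pi>\<^sub>E k\<in>{..<m}. {..<n k})"

type_synonym tensor = "(nat \<Rightarrow> nat) \<Rightarrow> (nat \<Rightarrow> nat) \<Rightarrow> complex"

definition herm_outer :: "nat \<Rightarrow> (nat \<Rightarrow> nat \<Rightarrow> complex) \<Rightarrow> tensor" where
  "herm_outer m x = (\<lambda>i j. (\<Prod>k<m. x k (i k)) * (\<Prod>k<m. cnj (x k (j k))))"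

definition tinner :: "nat \<Rightarrow> (nat \<Rightarrow> nat) \<Rightarrow> tensor \<Rightarrow> tensor \<Rightarrow> complex" where
  "tinner m n A B = (\<Sum>i\<in>idx m n. \<Sum>j\<in>idx m n. A i j * cnj (B i j))"

definition hermitian_tensor :: "nat \<Rightarrow> (nat \<Rightarrow> nat) \<Rightarrow> tensor \<Rightarrow> bool" where
  "hermitian_tensor m n H \<longleftrightarrow> (\<forall>i\<in>idx m n. \<forall>j\<in>idx m n. H i j = cnj (H j i))"

definition herm_form :: "nat \<Rightarrow> (nat \<Rightarrow> nat) \<Rightarrow> tensor \<Rightarrow> (nat \<Rightarrow> nat \<Rightarrow> complex) \<Rightarrow> complex" where
  "herm_form m n H x = tinner m n H (herm_outer m x)"

definition RD :: "nat \<Rightarrow> (nat \<Rightarrow> nat) \<Rightarrow> tensor set" where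
  "RD m n = {H. \<exists>(r::nat) (lam::nat \<Rightarrow> real) (u::nat \<Rightarrow> nat \<Rightarrow> nat \<Rightarrow> real).
     \<forall>i\<in>idx m n. \<forall>j\<in>idx m n.
       H i j = (\<Sum>s<r. complex_of_real (lam s) *
                  herm_outer m (\<lambda>k a. complex_of_real (u s k a)) i j)}"

text \<open>"\<ge> 0" for a complex number: it is real and nonnegative.\<close>
definition R_psd :: "nat \<Rightarrow> (nat \<Rightarrow> nat) \<Rightarrow> tensor \<Rightarrow> bool" where
  "R_psd m n H \<longleftrightarrow> (\<forall>x::nat \<Rightarrow> nat \<Rightarrow> real.
     let v = herm_form m n H (\<lambda>k a. complex_of_real (x k a)) in Im v = 0 \<and> 0 \<le> Re v)"

definition C_psd :: "nat \<Rightarrow> (nat \<Rightarrow> nat) \<Rightarrow> tensor \<Rightarrow> bool" where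
  "C_psd m n H \<longleftrightarrow> (\<forall>x::nat \<Rightarrow> nat \<Rightarrow> complex.
     let v = herm_form m n H x in Im v = 0 \<and> 0 \<le> Re v)"

end

theory Submission
  imports Defs
begin

lemma ofr_abs_sq: "(complex_of_real \<bar>g\<bar>)^2 = (complex_of_real g)^2"
  by (metis of_real_power power2_abs)

lemma form_eq:
  fixes lam :: "nat \<Rightarrow> real" and u :: "nat \<Rightarrow> nat \<Rightarrow> nat \<Rightarrow> real"
  assumes H: "\<forall>i\<in>idx m n. \<forall>j\<in>idx m n.
       H i j = (\<Sum>s<r. complex_of_real (lam s) *
                  herm_outer m (\<lambda>k a. complex_of_real (u s k a)) i j)"
  shows "herm_form m n H x = complex_of_real (\<Sum>s<r. lam s *
     (\<Prod>k<m. (cmod (\<Sum>a<n k. complex_of_real (u s k a) * cnj (x k a)))^2))"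
proof -
  define I where "I = idx m n"
  define Pu where "Pu s i = (\<Prod>k<m. complex_of_real (u s k (i k)))" for s i
  define Px where "Px i = (\<Prod>k<m. x k (i k))" for i
  define F where "F s k = (\<Sum>a<n k. complex_of_real (u s k a) * cnj (x k a))" for s k
  have cPu: "(\<Prod>k<m. cnj (complex_of_real (u s k (i k)))) = Pu s i" for s i
    by (simp add: Pu_def)
  have "herm_form m n H x = (\<Sum>i\<in>I. \<Sum>j\<in>I. H i j * cnj (herm_outer m x i j))"
    by (simp add: herm_form_def tinner_def I_def)
  also have "\<dots> = (\<Sum>i\<in>I. \<Sum>j\<in>I. \<Sum>s<r. complex_of_real (lam s) *
        ((Pu s i * cnj (Px i)) * (Pu s j * Px j)))"
  proof (intro sum.cong refl)
    fix i j assume i: "i \<in> I" and j: "j \<in> I"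
    have "H i j * cnj (herm_outer m x i j) = (\<Sum>s<r. complex_of_real (lam s) *
                  herm_outer m (\<lambda>k a. complex_of_real (u s k a)) i j) * cnj (herm_outer m x i j)"
      using H i j by (simp add: I_def)
    also have "\<dots> = (\<Sum>s<r. complex_of_real (lam s) *
        ((Pu s i * cnj (Px i)) * (Pu s j * Px j)))"
      unfolding sum_distrib_right
      by (intro sum.cong refl) (simp add: herm_outer_def cPu Px_def Pu_def)
    finally show "H i j * cnj (herm_outer m x i j) = \<dots>" .
  qed
  also have "\<dots> = (\<Sum>s<r. complex_of_real (lam s) *
        ((\<Sum>i\<in>I. Pu s i * cnj (Px i)) * (\<Sum>j\<in>I. Pu s j * Px j)))"
  proof -
    have "(\<Sum>i\<in>I. \<Sum>j\<in>I. \<Sum>s<r. complex_of_real (lam s) *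
        ((Pu s i * cnj (Px i)) * (Pu s j * Px j))) = (\<Sum>i\<in>I. \<Sum>s<r. \<Sum>j\<in>I. complex_of_real (lam s) *
        ((Pu s i * cnj (Px i)) * (Pu s j * Px j)))"
      by (intro sum.cong refl) (rule sum.swap)
    also have "\<dots> = (\<Sum>s<r. \<Sum>i\<in>I. \<Sum>j\<in>I. complex_of_real (lam s) *
        ((Pu s i * cnj (Px i)) * (Pu s j * Px j)))"
      by (rule sum.swap)
    also have "\<dots> = (\<Sum>s<r. complex_of_real (lam s) *
        ((\<Sum>i\<in>I. Pu s i * cnj (Px i)) * (\<Sum>j\<in>I. Pu s j * Px j)))"
      apply (simp add: sum_distrib_left sum_distrib_right mult.assoc)
      apply (rule sum.cong[OF refl])
      apply (rule sum.swap)
      done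
    finally show ?thesis .
  qed
  also have "\<dots> = (\<Sum>s<r. complex_of_real (lam s) *
        ((\<Prod>k<m. F s k) * (\<Prod>k<m. cnj (F s k))))"
  proof (intro sum.cong refl arg_cong2[where f="(*)"])
    fix s
    show "(\<Sum>i\<in>I. Pu s i * cnj (Px i)) = (\<Prod>k<m. F s k)"
      unfolding F_def I_def idx_def Pu_def Px_def
      by (subst prod_sum_PiE) (auto simp: prod.distrib)
    have cF: "cnj (F s k) = (\<Sum>a<n k. complex_of_real (u s k a) * x k a)" for k
      by (simp add: F_def cnj_sum)
    show "(\<Sum>j\<in>I. Pu s j * Px j) = (\<Prod>k<m. cnj (F s k))"
      unfolding cF I_def idx_def Pu_def Px_def
      by (subst prod_sum_PiE) (auto simp: prod.distrib)
  qed
  also have "\<dots> = complex_of_real (\<Sum>s<r. lam s * (\<Prod>k<m. (cmod (F s k))^2))"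
  proof -
    have nsq: "F s k * cnj (F s k) = complex_of_real ((cmod (F s k))^2)" for s k
      by (metis complex_norm_square)
    have "(\<Sum>s<r. complex_of_real (lam s) * ((\<Prod>k<m. F s k) * (\<Prod>k<m. cnj (F s k))))
        = (\<Sum>s<r. complex_of_real (lam s) * (\<Prod>k<m. complex_of_real ((cmod (F s k))^2)))"
      by (simp only: prod.distrib[symmetric] nsq)
    also have "\<dots> = complex_of_real (\<Sum>s<r. lam s * (\<Prod>k<m. (cmod (F s k))^2))"
      by (simp only: of_real_sum of_real_mult of_real_prod)
    finally show ?thesis .
  qed
  finally show ?thesis by (simp add: F_def)
qed

theorem proposition5p3:
  fixes m :: nat and n :: "nat \<Rightarrow> nat" and H :: tensor
  assumes "H \<in> RD m n"
  shows "R_psd m n H \<longleftrightarrow> C_psd m n H"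
proof
  assume "C_psd m n H"
  then show "R_psd m n H" unfolding C_psd_def R_psd_def by blast
next
  assume R: "R_psd m n H"
  from assms obtain r :: nat and lam :: "nat \<Rightarrow> real" and u :: "nat \<Rightarrow> nat \<Rightarrow> nat \<Rightarrow> real" where H: "\<forall>i\<in>idx m n. \<forall>j\<in>idx m n.
       H i j = (\<Sum>s<r. complex_of_real (lam s) *
                  herm_outer m (\<lambda>k a. complex_of_real (u s k a)) i j)"
    unfolding RD_def by blast
  define G where "G w s k = (\<Sum>a<n k. u s k a * w k a)" for w :: "nat \<Rightarrow> nat \<Rightarrow> real" and s k
  define q where "q w = (\<Sum>s<r. lam s * (\<Prod>k<m. (G w s k)^2))" for w
  have real_form: "herm_form m n H (\<lambda>k a. complex_of_real (w k a)) = complex_of_real (q w)" for w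
  proof -
    have "(\<Sum>a<n k. complex_of_real (u s k a) * complex_of_real (w k a)) = complex_of_real (G w s k)" for s k
        by (simp add: G_def)
    then show ?thesis using form_eq[OF H] by (simp add: q_def ofr_abs_sq)
  qed
  have qnn: "q w \<ge> 0" for w
    using R[unfolded R_psd_def, rule_format, of w] by (simp add: real_form Let_def)
  show "C_psd m n H"
    unfolding C_psd_def Let_def
  proof (intro allI)
    fix x :: "nat \<Rightarrow> nat \<Rightarrow> complex"
    define y where "y k a = Re (x k a)" for k a
    define z where "z k a = Im (x k a)" for k a
    define wS where "wS S k a = (if k \<in> S then y k a else z k a)" for S k a
    have Q: "(cmod (\<Sum>a<n k. complex_of_real (u s k a) * cnj (x k a)))^2 = (G y s k)^2 + (G z s k)^2" for s k
    proof -
      have "(\<Sum>a<n k. complex_of_real (u s k a) * cnj (x k a)) = Complex (G y s k) (- G z s k)"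
        by (simp add: complex_eq_iff G_def y_def z_def Re_sum Im_sum sum_negf)
      then show ?thesis by (simp add: cmod_power2)
    qed
    have P: "(\<Prod>k<m. (G y s k)^2 + (G z s k)^2) = (\<Sum>S\<in>Pow {..<m}. \<Prod>k<m. (G (wS S) s k)^2)" for s
    proof -
      have "(\<Prod>k<m. (G y s k)^2 + (G z s k)^2) = (\<Sum>S\<in>Pow {..<m}. (\<Prod>k\<in>S. (G y s k)^2) * (\<Prod>k\<in>{..<m}-S. (G z s k)^2))"
        by (rule prod_add) simp
      also have "\<dots> = (\<Sum>S\<in>Pow {..<m}. \<Prod>k<m. (G (wS S) s k)^2)"
      proof (intro sum.cong refl)
        fix S assume S: "S \<in> Pow {..<m}"
        have "(\<Prod>k<m. (G (wS S) s k)^2) = (\<Prod>k\<in>{..<m}-S. (G (wS S) s k)^2) * (\<Prod>k\<in>S. (G (wS S) s k)^2)"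
          using S by (intro prod.subset_diff) auto
        also have "(\<Prod>k\<in>S. (G (wS S) s k)^2) = (\<Prod>k\<in>S. (G y s k)^2)"
          by (intro prod.cong refl) (simp add: G_def wS_def)
        also have "(\<Prod>k\<in>{..<m}-S. (G (wS S) s k)^2) = (\<Prod>k\<in>{..<m}-S. (G z s k)^2)"
          by (intro prod.cong refl) (simp add: G_def wS_def)
        finally show "(\<Prod>k\<in>S. (G y s k)^2) * (\<Prod>k\<in>{..<m}-S. (G z s k)^2) = (\<Prod>k<m. (G (wS S) s k)^2)"
          by simp
      qed
      finally show ?thesis .
    qed
    have "herm_form m n H x = complex_of_real (\<Sum>S\<in>Pow {..<m}. q (wS S))"
    proof -
      have "herm_form m n H x = complex_of_real (\<Sum>s<r. lam s * (\<Prod>k<m. (G y s k)^2 + (G z s k)^2))"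
        using form_eq[OF H, of x] by (simp only: Q)
      also have "\<dots> = complex_of_real (\<Sum>s<r. lam s * (\<Sum>S\<in>Pow {..<m}. \<Prod>k<m. (G (wS S) s k)^2))"
        by (simp only: P)
      also have "(\<Sum>s<r. lam s * (\<Sum>S\<in>Pow {..<m}. \<Prod>k<m. (G (wS S) s k)^2))
          = (\<Sum>s<r. \<Sum>S\<in>Pow {..<m}. lam s * (\<Prod>k<m. (G (wS S) s k)^2))"
        by (simp add: sum_distrib_left)
      also have "\<dots> = (\<Sum>S\<in>Pow {..<m}. \<Sum>s<r. lam s * (\<Prod>k<m. (G (wS S) s k)^2))"
        by (rule sum.swap)
      finally show ?thesis by (simp add: q_def)
    qed
    moreover have "(\<Sum>S\<in>Pow {..<m}. q (wS S)) \<ge> 0" by (intro sum_nonneg qnn)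
    ultimately show "Im (herm_form m n H x) = 0 \<and> 0 \<le> Re (herm_form m n H x)" by simp
  qed
qed

end
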